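(* Every induced subcomplex of a unimodular simplicial complex is unimodular.
   Context: A simplicial complex on a finite ground set $V$ is a family of subsets of $V$ closed under subsets; facets are inclusion-maximal faces. For $W\subseteq V$ the induced subcomplex is $\{F\in\mathcal{C}:F\subseteq W\}$ on ground set $W$. $\mathcal{A}_{\mathcal{C}}$ is the $0/1$ matrix with columns indexed by $\mathbf{i}\in\{1,2\}^V$ and rows indexed by pairs $(F,\mathbf{e})$, $F$ a facet, $\mathbf{e}\in\{1,2\}^F$; entry $1$ iff $\mathbf{e}=\mathbf{i}|_F$. An integer matrix is unimodular if every circuit (nonzero integer kernel vector with coprime entries and inclusion-minimal support) has entries in $\{0,\pm1\}$; $\mathcal{C}$ is unimodular if $\mathcal{A}_{\mathcal{C}}$ is. *)

theory Defs
  imports Main "HOL-Library.FuncSet"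
begin

definition kernel_vec :: "'r set \<Rightarrow> 'c set \<Rightarrow> ('r \<Rightarrow> 'c \<Rightarrow> int) \<Rightarrow> ('c \<Rightarrow> int) \<Rightarrow> bool" where
  "kernel_vec R C A u \<longleftrightarrow> (\<forall>j. j \<notin> C \<longrightarrow> u j = 0) \<and> (\<forall>r\<in>R. (\<Sum>j\<in>C. A r j * u j) = 0)"

definition supp_vec :: "'c set \<Rightarrow> ('c \<Rightarrow> int) \<Rightarrow> 'c set" where
  "supp_vec C u = {j\<in>C. u j \<noteq> 0}"

definition circuit :: "'r set \<Rightarrow> 'c set \<Rightarrow> ('r \<Rightarrow> 'c \<Rightarrow> int) \<Rightarrow> ('c \<Rightarrow> int) \<Rightarrow> bool" where
  "circuit R C A u \<longleftrightarrow>
     kernel_vec R C A u \<and> supp_vec C u \<noteq> {} \<and> Gcd (u ` C) = 1 \<and>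
     (\<forall>w. kernel_vec R C A w \<and> supp_vec C w \<noteq> {} \<and> supp_vec C w \<subseteq> supp_vec C u
          \<longrightarrow> supp_vec C w = supp_vec C u)"

definition unimodular_mat :: "'r set \<Rightarrow> 'c set \<Rightarrow> ('r \<Rightarrow> 'c \<Rightarrow> int) \<Rightarrow> bool" where
  "unimodular_mat R C A \<longleftrightarrow> (\<forall>u. circuit R C A u \<longrightarrow> (\<forall>j\<in>C. u j \<in> {-1, 0, 1}))"

definition simplicial_complex :: "'a set \<Rightarrow> 'a set set \<Rightarrow> bool" where
  "simplicial_complex V K \<longleftrightarrow> finite V \<and> K \<subseteq> Pow V \<and> (\<forall>F\<in>K. \<forall>G. G \<subseteq> F \<longrightarrow> G \<in> K)"

definition facets :: "'a set set \<Rightarrow> 'a set set" where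
  "facets K = {F\<in>K. \<forall>G\<in>K. F \<subseteq> G \<longrightarrow> G = F}"

definition induced_subcomplex :: "'a set set \<Rightarrow> 'a set \<Rightarrow> 'a set set" where
  "induced_subcomplex K W = {F\<in>K. F \<subseteq> W}"

definition cols_A :: "'a set \<Rightarrow> ('a \<Rightarrow> nat) set" where
  "cols_A V = PiE V (\<lambda>_. {1, 2})"

definition rows_A :: "'a set set \<Rightarrow> ('a set \<times> ('a \<Rightarrow> nat)) set" where
  "rows_A K = (SIGMA F:facets K. PiE F (\<lambda>_. {1, 2}))"

definition entry_A :: "'a set \<times> ('a \<Rightarrow> nat) \<Rightarrow> ('a \<Rightarrow> nat) \<Rightarrow> int" where
  "entry_A r i = (if snd r = restrict i (fst r) then 1 else 0)"

definition unimodular_complex :: "'a set \<Rightarrow> 'a set set \<Rightarrow> bool" where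
  "unimodular_complex V K \<longleftrightarrow> unimodular_mat (rows_A K) (cols_A V) entry_A"

end

theory Submission
  imports Defs
begin

lemma kernel_iff:
  "kernel_vec (rows_A K) C entry_A u \<longleftrightarrow> (\<forall>j. j\<notin>C \<longrightarrow> u j = 0) \<and>
    (\<forall>F\<in>facets K. \<forall>e\<in>PiE F (\<lambda>_. {1,2}). (\<Sum>i\<in>C. if restrict i F = e then u i else 0) = 0)"
proof -
  have *: "\<And>F e. (\<Sum>i\<in>C. entry_A (F,e) i * u i) = (\<Sum>i\<in>C. if restrict i F = e then u i else 0)"
    by (rule sum.cong) (auto simp: entry_A_def)
  show ?thesis unfolding kernel_vec_def rows_A_def using * by auto
qed

lemma cols_finite: "finite V \<Longrightarrow> finite (cols_A V)"
  unfolding cols_A_def by (intro finite_PiE) auto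

lemma face_sum:
  assumes sc: "simplicial_complex V K" and ker: "kernel_vec (rows_A K) (cols_A V) entry_A x"
    and G: "G \<in> K" and e: "e \<in> PiE G (\<lambda>_. {1,2})"
  shows "(\<Sum>i\<in>cols_A V. if restrict i G = e then x i else 0) = 0"
proof -
  have fV: "finite V" and KV: "K \<subseteq> Pow V" using sc unfolding simplicial_complex_def by auto
  have fK: "finite K" using fV KV by (meson finite_Pow_iff finite_subset)
  obtain F where F: "F \<in> K" "G \<subseteq> F" "\<forall>b\<in>K. F \<subseteq> b \<longrightarrow> b = F"
  proof -
    obtain m where "m \<in> {F\<in>K. G \<subseteq> F}" "\<forall>b\<in>{F\<in>K. G \<subseteq> F}. m \<subseteq> b \<longrightarrow> m = b"
      using finite_has_maximal2[of "{F\<in>K. G \<subseteq> F}" G] fK G by auto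
    moreover have "\<forall>b\<in>K. m \<subseteq> b \<longrightarrow> b = m" using calculation by blast
    ultimately show ?thesis using that by blast
  qed
  have Ff: "F \<in> facets K" using F unfolding facets_def by auto
  have FV: "F \<subseteq> V" using F KV by auto
  have fF: "finite F" using FV fV finite_subset by auto
  define S where "S = {i\<in>cols_A V. restrict i G = e}"
  define T where "T = {e''\<in>PiE F (\<lambda>_. {1::nat,2}). restrict e'' G = e}"
  have fC: "finite (cols_A V)" using cols_finite fV by auto
  have fS: "finite S" using fC S_def by auto
  have "finite (PiE F (\<lambda>_. {1::nat,2}))" using fF by (intro finite_PiE) auto
  hence fT: "finite T" unfolding T_def by auto
  have img: "(\<lambda>i. restrict i F) ` S \<subseteq> T"
  proof
    fix y assume "y \<in> (\<lambda>i. restrict i F) ` S"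
    then obtain i where i: "i \<in> S" "y = restrict i F" by auto
    have "y \<in> PiE F (\<lambda>_. {1,2})" using i FV unfolding S_def cols_A_def by auto
    moreover have "restrict y G = e" using i F(2) unfolding S_def by (simp add: Int_absorb1 inf.absorb2)
    ultimately show "y \<in> T" unfolding T_def by auto
  qed
  have "(\<Sum>i\<in>cols_A V. if restrict i G = e then x i else 0) = sum x S"
    unfolding S_def using fC by (simp add: sum.inter_filter)
  also have "\<dots> = (\<Sum>y\<in>T. sum x {i. i \<in> S \<and> restrict i F = y})"
    using sum.group[OF fS fT img, of x] by simp
  also have "\<dots> = 0"
  proof (rule sum.neutral, rule ballI)
    fix y assume y: "y \<in> T"
    have "{i. i \<in> S \<and> restrict i F = y} = {i\<in>cols_A V. restrict i F = y}"
    proof -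
      have "restrict i G = e" if "restrict i F = y" for i
      proof -
        have "restrict i G = restrict (restrict i F) G" using F(2) by (simp add: Int_absorb1 inf.absorb2)
        thus ?thesis using that y unfolding T_def by auto
      qed
      thus ?thesis unfolding S_def by auto
    qed
    hence "sum x {i. i \<in> S \<and> restrict i F = y} = (\<Sum>i\<in>cols_A V. if restrict i F = y then x i else 0)"
      using fC by (simp add: sum.inter_filter)
    also have "\<dots> = 0" using ker Ff y unfolding kernel_iff T_def by auto
    finally show "sum x {i. i \<in> S \<and> restrict i F = y} = 0" .
  qed
  finally show ?thesis .
qed

theorem proposition3p1:
  fixes V W :: "'a set" and K :: "'a set set"
  assumes "simplicial_complex V K"
    and "unimodular_complex V K"
    and "W \<subseteq> V"
  shows "unimodular_complex W (induced_subcomplex K W)"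
proof -
  note sc = assms(1) and WV = assms(3)
  define KW where "KW = induced_subcomplex K W"
  have fV: "finite V" and KV: "K \<subseteq> Pow V" and cl: "\<forall>F\<in>K. \<forall>G. G \<subseteq> F \<longrightarrow> G \<in> K"
    using sc unfolding simplicial_complex_def by auto
  have fW: "finite W" using fV WV finite_subset by auto
  have scW: "simplicial_complex W KW"
    unfolding simplicial_complex_def KW_def induced_subcomplex_def using fW cl by auto
  define ext :: "('a \<Rightarrow> nat) \<Rightarrow> 'a \<Rightarrow> nat" where
    "ext j = (\<lambda>v. if v \<in> W then j v else if v \<in> V then 1 else undefined)" for j
  have ext_in: "ext j \<in> cols_A V" if "j \<in> cols_A W" for j
    using that WV unfolding cols_A_def ext_def PiE_def extensional_def Pi_def by auto
  have res_ext: "restrict (ext j) W = j" if "j \<in> cols_A W" for j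
    using that unfolding cols_A_def ext_def PiE_def extensional_def restrict_def by auto
  have inj: "inj_on ext (cols_A W)"
    by (metis inj_onI res_ext)
  have fCV: "finite (cols_A V)" and fCW: "finite (cols_A W)" using cols_finite fV fW by auto
  have reidx: "sum h (cols_A V) = (\<Sum>j\<in>cols_A W. h (ext j))"
    if "\<forall>i\<in>cols_A V. i \<notin> ext ` cols_A W \<longrightarrow> h i = 0" for h :: "_ \<Rightarrow> int"
  proof -
    have "sum h (cols_A V) = sum h (ext ` cols_A W)"
    proof (rule sum.mono_neutral_right[OF fCV])
      show "ext ` cols_A W \<subseteq> cols_A V" using ext_in by blast
      show "\<forall>i\<in>cols_A V - ext ` cols_A W. h i = 0" using that by blast
    qed
    also have "\<dots> = (\<Sum>j\<in>cols_A W. h (ext j))" using sum.reindex[OF inj] by simp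
    finally show ?thesis .
  qed
  show ?thesis
    unfolding unimodular_complex_def unimodular_mat_def KW_def[symmetric]
  proof (intro allI impI)
    fix u assume cu: "circuit (rows_A KW) (cols_A W) entry_A u"
    hence keru: "kernel_vec (rows_A KW) (cols_A W) entry_A u"
      and su: "supp_vec (cols_A W) u \<noteq> {}" and gu: "Gcd (u ` cols_A W) = 1"
      and minu: "\<And>w. kernel_vec (rows_A KW) (cols_A W) entry_A w \<Longrightarrow> supp_vec (cols_A W) w \<noteq> {}
          \<Longrightarrow> supp_vec (cols_A W) w \<subseteq> supp_vec (cols_A W) u
          \<Longrightarrow> supp_vec (cols_A W) w = supp_vec (cols_A W) u"
      unfolding circuit_def by auto
    define u' where "u' i = (if i \<in> ext ` cols_A W then u (restrict i W) else 0)" for i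
    have u'_ext: "u' (ext j) = u j" if "j \<in> cols_A W" for j
      using that res_ext unfolding u'_def by auto
    have u'_zero: "u' i = 0" if "i \<notin> ext ` cols_A W" for i
      using that unfolding u'_def by auto
    have ker': "kernel_vec (rows_A K) (cols_A V) entry_A u'"
      unfolding kernel_iff
    proof (intro conjI allI impI ballI)
      fix j assume "j \<notin> cols_A V" thus "u' j = 0" using ext_in u'_zero by (metis imageE)
    next
      fix F and e :: "'a \<Rightarrow> nat" assume F: "F \<in> facets K" and e: "e \<in> PiE F (\<lambda>_. {1,2})"
      have FK: "F \<in> K" using F unfolding facets_def by auto
      hence FV: "F \<subseteq> V" using KV by auto
      have "(\<Sum>i\<in>cols_A V. if restrict i F = e then u' i else 0)
          = (\<Sum>j\<in>cols_A W. if restrict (ext j) F = e then u' (ext j) else 0)"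
        using u'_zero by (intro reidx) auto
      also have "\<dots> = (\<Sum>j\<in>cols_A W. if restrict (ext j) F = e then u j else 0)"
        using u'_ext by (intro sum.cong) auto
      also have "\<dots> = 0"
      proof (cases "\<exists>v\<in>F-W. e v \<noteq> 1")
        case True
        then obtain v where v: "v \<in> F" "v \<notin> W" "e v \<noteq> 1" by auto
        have "restrict (ext j) F \<noteq> e" for j
        proof
          assume "restrict (ext j) F = e"
          hence "restrict (ext j) F v = e v" by simp
          thus False using v FV unfolding ext_def by auto
        qed
        thus ?thesis by simp
      next
        case False
        have eq: "restrict (ext j) F = e \<longleftrightarrow> restrict j (F \<inter> W) = restrict e (F \<inter> W)"
          if j: "j \<in> cols_A W" for j
        proof
          assume "restrict (ext j) F = e"
          hence "restrict (restrict (ext j) F) (F \<inter> W) = restrict e (F \<inter> W)" by simp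
          hence "restrict (ext j) (F \<inter> W) = restrict e (F \<inter> W)" by (metis restrict_restrict Int_assoc Int_absorb)
          moreover have "restrict (ext j) (F \<inter> W) = restrict j (F \<inter> W)"
            unfolding ext_def restrict_def by (auto simp: fun_eq_iff)
          ultimately show "restrict j (F \<inter> W) = restrict e (F \<inter> W)" by simp
        next
          assume a: "restrict j (F \<inter> W) = restrict e (F \<inter> W)"
          show "restrict (ext j) F = e"
          proof
            fix v
            show "restrict (ext j) F v = e v"
            proof (cases "v \<in> F")
              case True
              show ?thesis
              proof (cases "v \<in> W")
                case True
                hence "restrict j (F \<inter> W) v = restrict e (F \<inter> W) v" using a by simp
                thus ?thesis using True \<open>v \<in> F\<close> unfolding ext_def by auto
              next
                case nW: False
                thus ?thesis using False True FV unfolding ext_def by auto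
              qed
            next
              case nF: False
              thus ?thesis using e by auto
            qed
          qed
        qed
        have "(\<Sum>j\<in>cols_A W. if restrict (ext j) F = e then u j else 0)
            = (\<Sum>j\<in>cols_A W. if restrict j (F \<inter> W) = restrict e (F \<inter> W) then u j else 0)"
          using eq by (intro sum.cong) auto
        also have "\<dots> = 0"
        proof (rule face_sum[OF scW keru])
          show "F \<inter> W \<in> KW" unfolding KW_def induced_subcomplex_def using cl FK by auto
          show "restrict e (F \<inter> W) \<in> PiE (F \<inter> W) (\<lambda>_. {1,2})" using e by auto
        qed
        finally show ?thesis .
      qed
      finally show "(\<Sum>i\<in>cols_A V. if restrict i F = e then u' i else 0) = 0" .
    qed
    have supp': "supp_vec (cols_A V) u' = ext ` supp_vec (cols_A W) u"
    proof
      show "supp_vec (cols_A V) u' \<subseteq> ext ` supp_vec (cols_A W) u"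
      proof
        fix i assume i: "i \<in> supp_vec (cols_A V) u'"
        hence "i \<in> ext ` cols_A W" using u'_zero unfolding supp_vec_def by blast
        then obtain j where j: "j \<in> cols_A W" "i = ext j" by blast
        hence "u j \<noteq> 0" using i u'_ext unfolding supp_vec_def by auto
        thus "i \<in> ext ` supp_vec (cols_A W) u" using j unfolding supp_vec_def by blast
      qed
      show "ext ` supp_vec (cols_A W) u \<subseteq> supp_vec (cols_A V) u'"
      proof
        fix i assume "i \<in> ext ` supp_vec (cols_A W) u"
        then obtain j where j: "j \<in> cols_A W" "u j \<noteq> 0" "i = ext j" unfolding supp_vec_def by blast
        thus "i \<in> supp_vec (cols_A V) u'" using u'_ext ext_in unfolding supp_vec_def by simp
      qed
    qed
    have circ': "circuit (rows_A K) (cols_A V) entry_A u'"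
      unfolding circuit_def
    proof (intro conjI allI impI)
      show "kernel_vec (rows_A K) (cols_A V) entry_A u'" by (rule ker')
      show "supp_vec (cols_A V) u' \<noteq> {}" using supp' su by auto
      have "u ` cols_A W \<subseteq> u' ` cols_A V" using u'_ext ext_in by force
      hence "Gcd (u' ` cols_A V) dvd Gcd (u ` cols_A W)" by (meson Gcd_dvd Gcd_greatest subsetD)
      hence "Gcd (u' ` cols_A V) dvd 1" using gu by simp
      moreover have "Gcd (u' ` cols_A V) \<ge> 0" by simp
      ultimately show "Gcd (u' ` cols_A V) = 1" by simp
    next
      fix w' assume a: "kernel_vec (rows_A K) (cols_A V) entry_A w' \<and> supp_vec (cols_A V) w' \<noteq> {}
          \<and> supp_vec (cols_A V) w' \<subseteq> supp_vec (cols_A V) u'"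
      hence kw': "kernel_vec (rows_A K) (cols_A V) entry_A w'" and sw': "supp_vec (cols_A V) w' \<noteq> {}"
        and sub: "supp_vec (cols_A V) w' \<subseteq> ext ` supp_vec (cols_A W) u" using supp' by auto
      have w'z: "w' i = 0" if "i \<in> cols_A V" "i \<notin> ext ` cols_A W" for i
        using that sub unfolding supp_vec_def by auto
      define w where "w j = (if j \<in> cols_A W then w' (ext j) else 0)" for j
      have kw: "kernel_vec (rows_A KW) (cols_A W) entry_A w"
        unfolding kernel_iff
      proof (intro conjI allI impI ballI)
        fix j assume "j \<notin> cols_A W" thus "w j = 0" unfolding w_def by auto
      next
        fix G and e :: "'a \<Rightarrow> nat" assume G: "G \<in> facets KW" and e: "e \<in> PiE G (\<lambda>_. {1,2})"
        have GK: "G \<in> K" and GW: "G \<subseteq> W"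
          using G unfolding facets_def KW_def induced_subcomplex_def by auto
        have "(\<Sum>j\<in>cols_A W. if restrict j G = e then w j else 0)
            = (\<Sum>j\<in>cols_A W. if restrict (ext j) G = e then w' (ext j) else 0)"
        proof (rule sum.cong)
          fix j assume "j \<in> cols_A W"
          moreover have "restrict (ext j) G = restrict j G"
            using GW unfolding ext_def restrict_def by (auto simp: fun_eq_iff)
          ultimately show "(if restrict j G = e then w j else 0)
              = (if restrict (ext j) G = e then w' (ext j) else 0)" unfolding w_def by simp
        qed simp
        also have "\<dots> = (\<Sum>i\<in>cols_A V. if restrict i G = e then w' i else 0)"
          using w'z by (intro reidx[symmetric]) auto
        also have "\<dots> = 0" by (rule face_sum[OF sc kw' GK e])
        finally show "(\<Sum>j\<in>cols_A W. if restrict j G = e then w j else 0) = 0" .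
      qed
      have sw_eq: "supp_vec (cols_A W) w = {j\<in>cols_A W. w' (ext j) \<noteq> 0}"
        unfolding supp_vec_def w_def by auto
      have ne: "supp_vec (cols_A W) w \<noteq> {}"
      proof -
        obtain i where "i \<in> supp_vec (cols_A V) w'" using sw' by auto
        then obtain j where "j \<in> supp_vec (cols_A W) u" "i = ext j" "w' i \<noteq> 0"
          using sub unfolding supp_vec_def by auto
        thus ?thesis unfolding supp_vec_def w_def by auto
      qed
      have sb: "supp_vec (cols_A W) w \<subseteq> supp_vec (cols_A W) u"
      proof
        fix j assume "j \<in> supp_vec (cols_A W) w"
        hence j: "j \<in> cols_A W" "w' (ext j) \<noteq> 0" unfolding sw_eq by auto
        hence "ext j \<in> supp_vec (cols_A V) w'" using ext_in unfolding supp_vec_def by auto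
        hence "ext j \<in> ext ` supp_vec (cols_A W) u" using sub by auto
        then obtain k where "k \<in> supp_vec (cols_A W) u" "ext j = ext k" by auto
        thus "j \<in> supp_vec (cols_A W) u" using inj j unfolding supp_vec_def inj_on_def by auto
      qed
      have eqs: "supp_vec (cols_A W) w = supp_vec (cols_A W) u" using minu[OF kw ne sb] .
      show "supp_vec (cols_A V) w' = supp_vec (cols_A V) u'"
      proof
        show "supp_vec (cols_A V) w' \<subseteq> supp_vec (cols_A V) u'" using a by auto
        show "supp_vec (cols_A V) u' \<subseteq> supp_vec (cols_A V) w'"
        proof
          fix i assume "i \<in> supp_vec (cols_A V) u'"
          then obtain j where j: "j \<in> supp_vec (cols_A W) u" "i = ext j" using supp' by auto
          hence "j \<in> cols_A W" "w' (ext j) \<noteq> 0" using eqs unfolding sw_eq by (auto simp: supp_vec_def)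
          thus "i \<in> supp_vec (cols_A V) w'" using j ext_in unfolding supp_vec_def by auto
        qed
      qed
    qed
    have "\<forall>i\<in>cols_A V. u' i \<in> {-1,0,1}"
      using assms(2) circ' unfolding unimodular_complex_def unimodular_mat_def by blast
    thus "\<forall>j\<in>cols_A W. u j \<in> {-1,0,1}" using u'_ext ext_in by metis
  qed
qed

end
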